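(* Let $(\mathcal S,\mathcal Q,\Theta)$ be a Pufferfish scenario, $f:\mathcal X\to\mathbb R^d$ a query, and $\omega$ a continuous slice distribution on $\mathbb S^{d-1}$. Draw i.i.d. directions $U_1,\dots,U_m\sim\omega$. Assume $0\le\Delta^u_\infty\le\Delta_0$ for all $u$. Fix $\alpha>1$, $\varepsilon\ge0$, $\gamma\in(0,1)$. Let $\widehat\Delta_\infty(U_\ell)$ be random quantities satisfying $\Pr(\Delta^{U_\ell}_\infty\le\widehat\Delta_\infty(U_\ell)\text{ for all }\ell\in[m])\ge1-\gamma/2$, where the probability is over the conditional sampling used to form them. For $\sigma^2>0$ define $c(\sigma)=\frac{\alpha(\alpha-1)}{2\sigma^2}$, $\widehat\mu_m(\sigma)=\frac1m\sum_{\ell=1}^m\exp(c(\sigma)(\widehat\Delta_\infty(U_\ell))^2)$ and $b(\sigma)=\exp(c(\sigma)\Delta_0^2)$. If the Gaussian mechanism uses $N\sim\mathcal N(0,\sigma^2I_d)$ (independent of $X$) with $\sigma^2$ satisfying \[ \frac1{\alpha-1}\log\!\left(\widehat\mu_m(\sigma)+(b(\sigma)-1)\sqrt{\frac{\log(4/\gamma)}{2m}}\right)\le\varepsilon, \] then with probability at least $1-\gamma$ (over both the conditional sampling and the draw of $U_{1:m}$), $\mathcal M(X)=f(X)+N$ satisfies $(\alpha,\varepsilon,\omega)$-Joint-SRPP in $(\mathcal S,\mathcal Q,\Theta)$.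
   Context: Pufferfish scenario: secrets $\mathcal S$, pairs $\mathcal Q\subseteq\mathcal S\times\mathcal S$, priors $\Theta$; each $\theta$ is a joint law of secret $S$ and dataset $X$, with secret marginal $P^S_\theta$. $P^{f,s}_\theta$ is the law of $f(X)$ given $S=s$ under $\theta$; $\mathcal M^\theta_s$ the law of $\mathcal M(X)$ given $S=s$ under $\theta$. $\mathbb S^{d-1}$ is the unit sphere, $\Psi^u(a)=\langle a,u\rangle$, $\Psi^u_\#$ pushforward. $W_\infty(\nu,\mu)=\inf_{\pi\in\Pi(\nu,\mu)}\sup_{(x,y)\in\mathrm{supp}\,\pi}|x-y|$ for measures on $\mathbb R$. $\Delta^u_\infty:=\max_{(s_i,s_j)\in\mathcal Q,\theta\in\Theta}W_\infty(\Psi^u_\#P^{f,s_i}_\theta,\Psi^u_\#P^{f,s_j}_\theta)$. $\mathtt D_\alpha$ is R\'enyi divergence; $\mathtt{JSD}^\omega_\alpha(P\|Q)=\frac1{\alpha-1}\log\int\exp((\alpha-1)\mathtt D_\alpha(\Psi^u_\#P\|\Psi^u_\#Q))\,d\omega(u)$. $\mathcal M$ is $(\alpha,\varepsilon,\omega)$-Joint-SRPP in $(\mathcal S,\mathcal Q,\Theta)$ if $\mathtt{JSD}^\omega_\alpha(\mathcal M^\theta_{s_i}\|\mathcal M^\theta_{s_j})\le\varepsilon$ for all $\theta\in\Theta$ and $(s_i,s_j)\in\mathcal Q$ with $P^S_\theta(s_i),P^S_\theta(s_j)>0$. *)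

theory Defs
  imports "HOL-Probability.Probability"
begin

text \<open>A prior theta is represented by its secret marginal (a pmf on secrets) together
with the conditional law of the dataset X given S = s (a kernel s -> law of X).
This is a disintegration of the joint law of (S, X).\<close>

type_synonym ('s, 'x) prior = "'s pmf \<times> ('s \<Rightarrow> 'x measure)"

definition proj_meas :: "'a::euclidean_space \<Rightarrow> 'a measure \<Rightarrow> real measure" where
  "proj_meas u M = distr M borel (\<lambda>a. a \<bullet> u)"

definition msupp :: "(real \<times> real) measure \<Rightarrow> (real \<times> real) set" where
  "msupp \<pi> = {z. \<forall>e>0. emeasure \<pi> (ball z e) > 0}"

definition couplings :: "real measure \<Rightarrow> real measure \<Rightarrow> (real \<times> real) measure set" where
  "couplings \<nu> \<mu> = {\<pi>. sets \<pi> = sets (borel :: (real \<times> real) measure) \<and> prob_space \<pi> \<and>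
      distr \<pi> borel fst = \<nu> \<and> distr \<pi> borel snd = \<mu>}"

definition W_inf :: "real measure \<Rightarrow> real measure \<Rightarrow> ereal" where
  "W_inf \<nu> \<mu> = (INF \<pi>\<in>couplings \<nu> \<mu>. SUP z\<in>msupp \<pi>. ereal \<bar>fst z - snd z\<bar>)"

definition query_law :: "('x \<Rightarrow> 'a::euclidean_space) \<Rightarrow> ('s, 'x) prior \<Rightarrow> 's \<Rightarrow> 'a measure" where
  "query_law f \<theta> s = distr (snd \<theta> s) borel f"

text \<open>Delta^u_infty (the max over Q and Theta written as a supremum).\<close>
definition Delta_inf :: "('s \<times> 's) set \<Rightarrow> ('s, 'x) prior set \<Rightarrow> ('x \<Rightarrow> 'a::euclidean_space)
    \<Rightarrow> 'a \<Rightarrow> ereal" where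
  "Delta_inf Q \<Theta> f u = Sup {W_inf (proj_meas u (query_law f \<theta> si)) (proj_meas u (query_law f \<theta> sj))
      | si sj \<theta>. (si, sj) \<in> Q \<and> \<theta> \<in> \<Theta> \<and> pmf (fst \<theta>) si > 0 \<and> pmf (fst \<theta>) sj > 0}"

definition renyi_moment :: "real \<Rightarrow> real measure \<Rightarrow> real measure \<Rightarrow> ennreal" where
  "renyi_moment \<alpha> P Q = (if absolutely_continuous Q P
     then (\<integral>\<^sup>+ x. ennreal (enn2real (RN_deriv Q P x) powr \<alpha>) \<partial>Q) else \<infinity>)"

definition renyi_div :: "real \<Rightarrow> real measure \<Rightarrow> real measure \<Rightarrow> ereal" where
  "renyi_div \<alpha> P Q = (if renyi_moment \<alpha> P Q = \<infinity> then \<infinity>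
     else ereal (ln (enn2real (renyi_moment \<alpha> P Q)) / (\<alpha> - 1)))"

definition ereal_exp :: "ereal \<Rightarrow> ennreal" where
  "ereal_exp x = (case x of ereal r \<Rightarrow> ennreal (exp r) | PInfty \<Rightarrow> \<infinity> | MInfty \<Rightarrow> 0)"

definition ennreal_ln :: "ennreal \<Rightarrow> ereal" where
  "ennreal_ln x = (if x = \<infinity> then \<infinity> else if x = 0 then -\<infinity> else ereal (ln (enn2real x)))"

definition JSD :: "real \<Rightarrow> 'a::euclidean_space measure \<Rightarrow> 'a measure \<Rightarrow> 'a measure \<Rightarrow> ereal" where
  "JSD \<alpha> \<omega> P Q = ereal (1 / (\<alpha> - 1)) *
     ennreal_ln (\<integral>\<^sup>+ u. ereal_exp (ereal (\<alpha> - 1) * renyi_div \<alpha> (proj_meas u P) (proj_meas u Q)) \<partial>\<omega>)"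

text \<open>(alpha, eps, omega)-Joint-SRPP of a mechanism, given through the law of its output
  conditional on S = s under theta, \<open>mlaw \<theta> s\<close>.\<close>
definition joint_SRPP :: "real \<Rightarrow> real \<Rightarrow> 'a::euclidean_space measure \<Rightarrow> ('s \<times> 's) set
    \<Rightarrow> ('s, 'x) prior set \<Rightarrow> (('s, 'x) prior \<Rightarrow> 's \<Rightarrow> 'a measure) \<Rightarrow> bool" where
  "joint_SRPP \<alpha> \<epsilon> \<omega> Q \<Theta> mlaw \<longleftrightarrow>
     (\<forall>\<theta>\<in>\<Theta>. \<forall>si sj. (si, sj) \<in> Q \<and> pmf (fst \<theta>) si > 0 \<and> pmf (fst \<theta>) sj > 0 \<longrightarrow>
        JSD \<alpha> \<omega> (mlaw \<theta> si) (mlaw \<theta> sj) \<le> ereal \<epsilon>)"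

text \<open>Isotropic Gaussian N(0, sigma^2 I_d) on R^d (sigma is the standard deviation).\<close>
definition gauss_vec :: "real \<Rightarrow> 'a::euclidean_space measure" where
  "gauss_vec \<sigma> = density lborel (\<lambda>x. ennreal ((2 * pi * \<sigma>\<^sup>2) powr (- real DIM('a) / 2)
       * exp (- (norm x)\<^sup>2 / (2 * \<sigma>\<^sup>2))))"

definition gauss_mech_law :: "('x \<Rightarrow> 'a::euclidean_space) \<Rightarrow> real \<Rightarrow> ('s, 'x) prior \<Rightarrow> 's \<Rightarrow> 'a measure" where
  "gauss_mech_law f \<sigma> \<theta> s = distr (snd \<theta> s \<Otimes>\<^sub>M gauss_vec \<sigma>) borel (\<lambda>(x, n). f x + n)"

end

theory Submission
  imports Defs
begin

lemma gauss_vec_prod: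
  fixes \<sigma> :: real
  assumes \<sigma>: "\<sigma> > 0"
  shows "(gauss_vec \<sigma> :: 'a::euclidean_space measure) =
    distr (\<Pi>\<^sub>M b\<in>(Basis::'a set). density lborel (normal_density 0 \<sigma>)) borel (\<lambda>f. \<Sum>b\<in>Basis. f b *\<^sub>R b)"
proof -
  let ?N = "density lborel (\<lambda>x. ennreal (normal_density 0 \<sigma> x))"
  let ?L = "\<Pi>\<^sub>M b\<in>(Basis::'a set). (lborel::real measure)"
  let ?\<phi> = "\<lambda>f. \<Sum>b\<in>(Basis::'a set). f b *\<^sub>R b"
  define g :: "'a \<Rightarrow> ennreal" where "g x = ennreal ((2 * pi * \<sigma>\<^sup>2) powr (- real DIM('a) / 2)
       * exp (- (norm x)\<^sup>2 / (2 * \<sigma>\<^sup>2)))" for x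
  have gm[measurable]: "g \<in> borel_measurable borel" unfolding g_def by measurable
  have phim[measurable]: "?\<phi> \<in> measurable ?L borel" by measurable
  have "gauss_vec \<sigma> = density lborel g" unfolding gauss_vec_def g_def by simp
  also have "\<dots> = density (distr ?L borel ?\<phi>) g" by (subst lborel_eq) simp
  also have "\<dots> = distr (density ?L (\<lambda>f. g (?\<phi> f))) borel ?\<phi>"
    by (rule density_distr) measurable
  also have "density ?L (\<lambda>f. g (?\<phi> f)) = (\<Pi>\<^sub>M b\<in>(Basis::'a set). ?N)"
  proof -
    interpret product_sigma_finite "\<lambda>_::'a. ?N"
      using prob_space_normal_density[OF \<sigma>, of 0] by (simp add: product_sigma_finite_def prob_space_imp_sigma_finite)
    have gphi: "g (?\<phi> f) = (\<Prod>b\<in>Basis. ennreal (normal_density 0 \<sigma> (f b)))" for f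
    proof -
      have n2: "(norm (?\<phi> f))\<^sup>2 = (\<Sum>b\<in>Basis. (f b)\<^sup>2)"
      proof -
        have "(norm (?\<phi> f))\<^sup>2 = ?\<phi> f \<bullet> ?\<phi> f" by (simp add: power2_norm_eq_inner)
        also have "\<dots> = (\<Sum>b\<in>Basis. (?\<phi> f \<bullet> b) * (?\<phi> f \<bullet> b))" by (rule euclidean_inner)
        also have "\<dots> = (\<Sum>b\<in>Basis. (f b)\<^sup>2)"
          by (intro sum.cong refl) (simp add: inner_sum_left inner_Basis if_distrib power2_eq_square
              sum.delta cong: if_cong)
        finally show ?thesis .
      qed
      have "(\<Prod>b\<in>(Basis::'a set). normal_density 0 \<sigma> (f b)) =
         (\<Prod>b\<in>(Basis::'a set). (1 / sqrt (2 * pi * \<sigma>\<^sup>2)) * exp (- (f b)\<^sup>2 / (2 * \<sigma>\<^sup>2)))"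
        by (simp add: normal_density_def)
      also have "\<dots> = (\<Prod>b\<in>(Basis::'a set). (1 / sqrt (2 * pi * \<sigma>\<^sup>2))) * (\<Prod>b\<in>(Basis::'a set). exp (- (f b)\<^sup>2 / (2 * \<sigma>\<^sup>2)))"
        by (rule prod.distrib)
      also have "\<dots> = (1 / sqrt (2 * pi * \<sigma>\<^sup>2)) ^ DIM('a) * exp (- (\<Sum>b\<in>Basis. (f b)\<^sup>2) / (2 * \<sigma>\<^sup>2))"
      proof -
        have e: "- (\<Sum>b\<in>(Basis::'a set). (f b)\<^sup>2) / (2 * \<sigma>\<^sup>2) = (\<Sum>b\<in>(Basis::'a set). - (f b)\<^sup>2 / (2 * \<sigma>\<^sup>2))"
          by (simp add: sum_divide_distrib sum_negf)
        show ?thesis unfolding e by (simp only: exp_sum[OF finite_Basis] prod_constant)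
      qed
      also have "(1 / sqrt (2 * pi * \<sigma>\<^sup>2)) ^ DIM('a) = (2 * pi * \<sigma>\<^sup>2) powr (- real DIM('a) / 2)"
      proof -
        have pos: "2 * pi * \<sigma>\<^sup>2 > 0" using \<sigma> by simp
        have "(1 / sqrt (2 * pi * \<sigma>\<^sup>2)) = (2 * pi * \<sigma>\<^sup>2) powr (- (1 / 2))"
          using pos by (simp only: powr_minus_divide powr_half_sqrt less_imp_le)
        then have "(1 / sqrt (2 * pi * \<sigma>\<^sup>2)) ^ DIM('a) = (2 * pi * \<sigma>\<^sup>2) powr (real DIM('a) * (- (1 / 2)))"
          using pos by (simp only: powr_power)
        then show ?thesis by simp
      qed
      finally show ?thesis unfolding g_def n2
        by (simp add: prod_ennreal normal_density_nonneg)
    qed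
    show ?thesis
    proof (rule PiM_eqI)
      show "sets (density ?L (\<lambda>f. g (?\<phi> f))) = sets (\<Pi>\<^sub>M b\<in>(Basis::'a set). ?N)"
        by (simp cong: sets_PiM_cong)
    next
      fix A assume A: "\<And>i. i \<in> (Basis::'a set) \<Longrightarrow> A i \<in> sets ?N"
      have Am[measurable]: "i \<in> Basis \<Longrightarrow> A i \<in> sets borel" for i using A by simp
      have "emeasure (density ?L (\<lambda>f. g (?\<phi> f))) (Pi\<^sub>E Basis A) =
          (\<integral>\<^sup>+ f. g (?\<phi> f) * indicator (Pi\<^sub>E Basis A) f \<partial>?L)"
        by (rule emeasure_density) (simp_all add: measurable_compose[OF phim gm] sets_PiM_I_finite)
      also have "\<dots> = (\<integral>\<^sup>+ f. (\<Prod>b\<in>Basis. ennreal (normal_density 0 \<sigma> (f b)) * indicator (A b) (f b)) \<partial>?L)"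
        by (intro nn_integral_cong) (auto simp: gphi prod.distrib indicator_def space_PiM PiE_def Pi_def)
      also have "\<dots> = (\<Prod>b\<in>Basis. \<integral>\<^sup>+ x. ennreal (normal_density 0 \<sigma> x) * indicator (A b) x \<partial>lborel)"
        by (rule product_sigma_finite.product_nn_integral_prod) (auto simp: product_sigma_finite_def sigma_finite_lborel)
      also have "\<dots> = (\<Prod>b\<in>Basis. emeasure ?N (A b))"
        by (intro prod.cong refl) (simp add: emeasure_density A)
      finally show "emeasure (density ?L (\<lambda>f. g (?\<phi> f))) (Pi\<^sub>E Basis A) = (\<Prod>b\<in>Basis. emeasure ?N (A b))" .
    qed simp
  qed
  finally show ?thesis .
qed


lemma gauss_proj:
  fixes u :: "'a::euclidean_space"
  assumes \<sigma>: "\<sigma> > 0" and u: "norm u = 1"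
  shows "distr (gauss_vec \<sigma> :: 'a measure) borel (\<lambda>n. n \<bullet> u) = density lborel (\<lambda>x. ennreal (normal_density 0 \<sigma> x))"
proof -
  let ?N = "density lborel (\<lambda>x. ennreal (normal_density 0 \<sigma> x))"
  let ?Pi = "\<Pi>\<^sub>M b\<in>(Basis::'a set). ?N"
  have Nprob: "prob_space ?N" using prob_space_normal_density[OF \<sigma>] .
  interpret P: prob_space ?Pi by (rule prob_space_PiM) (rule Nprob)
  define I where "I = {b\<in>(Basis::'a set). b \<bullet> u \<noteq> 0}"
  have Ifin: "finite I" unfolding I_def by simp
  have Ine: "I \<noteq> {}"
  proof
    assume "I = {}"
    then have "\<forall>b\<in>(Basis::'a set). u \<bullet> b = 0" unfolding I_def by (auto simp: inner_commute)
    then have "u = 0" using euclidean_all_zero_iff by blast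
    with u show False by simp
  qed
  have phim[measurable]: "(\<lambda>f. \<Sum>b\<in>(Basis::'a set). f b *\<^sub>R b) \<in> measurable ?Pi borel" by measurable
  have "distr (gauss_vec \<sigma> :: 'a measure) borel (\<lambda>n. n \<bullet> u) =
      distr ?Pi borel (\<lambda>f. (\<Sum>b\<in>(Basis::'a set). f b *\<^sub>R b) \<bullet> u)"
    unfolding gauss_vec_prod[OF \<sigma>] by (subst distr_distr) (auto simp: comp_def)
  also have "\<dots> = distr ?Pi borel (\<lambda>f. \<Sum>b\<in>I. (b \<bullet> u) * f b)"
  proof (rule distr_cong)
    fix f
    have "(\<Sum>b\<in>(Basis::'a set). f b *\<^sub>R b) \<bullet> u = (\<Sum>b\<in>(Basis::'a set). (b \<bullet> u) * f b)"
      by (simp add: inner_sum_left mult.commute)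
    also have "\<dots> = (\<Sum>b\<in>I. (b \<bullet> u) * f b)"
      unfolding I_def by (rule sum.mono_neutral_right) auto
    finally show "(\<Sum>b\<in>(Basis::'a set). f b *\<^sub>R b) \<bullet> u = (\<Sum>b\<in>I. (b \<bullet> u) * f b)" .
  qed simp_all
  also have "\<dots> = density lborel (\<lambda>x. ennreal (normal_density 0 \<sigma> x))"
  proof -
    have comp: "distr ?Pi borel (\<lambda>f. f b) = ?N" if "b \<in> Basis" for b
    proof -
      have "distr ?Pi borel (\<lambda>f. f b) = distr ?Pi ?N (\<lambda>f. f b)"
        by (rule distr_cong) simp_all
      also have "\<dots> = ?N" using that by (intro distr_PiM_component Nprob)
      finally show ?thesis .
    qed
    have indB: "P.indep_vars (\<lambda>_. borel) (\<lambda>b f. f b) (Basis::'a set)"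
    proof (subst P.indep_vars_iff_distr_eq_PiM')
      show "distr ?Pi (\<Pi>\<^sub>M i\<in>(Basis::'a set). borel) (\<lambda>x. \<lambda>i\<in>Basis. x i) =
          (\<Pi>\<^sub>M i\<in>(Basis::'a set). distr ?Pi borel (\<lambda>f. f i))"
      proof -
        have "distr ?Pi (\<Pi>\<^sub>M i\<in>(Basis::'a set). borel) (\<lambda>x. \<lambda>i\<in>Basis. x i) = distr ?Pi ?Pi (\<lambda>x. x)"
          by (rule distr_cong) (auto simp: space_PiM PiE_def extensional_restrict cong: sets_PiM_cong)
        also have "\<dots> = ?Pi" by simp
        also have "\<dots> = (\<Pi>\<^sub>M i\<in>(Basis::'a set). distr ?Pi borel (\<lambda>f. f i))"
          by (rule PiM_cong) (simp_all add: comp)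
        finally show ?thesis .
      qed
    qed auto
    have indI: "P.indep_vars (\<lambda>_. borel) (\<lambda>b f. (b \<bullet> u) * f b) I"
      using P.indep_vars_compose2[OF P.indep_vars_subset[OF indB], of I "\<lambda>b x. (b \<bullet> u) * x" "\<lambda>_. borel"]
      unfolding I_def by auto
    have distb: "distributed ?Pi lborel (\<lambda>f. 0 + (b \<bullet> u) * f b) (normal_density (0 + (b \<bullet> u) * 0) (\<bar>b \<bullet> u\<bar> * \<sigma>))"
      if "b \<in> I" for b
    proof (rule P.normal_density_affine)
      have "distr ?Pi lborel (\<lambda>f. f b) = ?N"
        using comp[of b] that unfolding I_def by (subst distr_cong[OF refl sets_lborel refl]) simp_all
      then show "distributed ?Pi lborel (\<lambda>f. f b) (\<lambda>x. ennreal (normal_density 0 \<sigma> x))"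
        using that unfolding distributed_def I_def by auto
    qed (use \<sigma> that in \<open>auto simp: I_def\<close>)
    have "distributed ?Pi lborel (\<lambda>f. \<Sum>b\<in>I. (b \<bullet> u) * f b)
        (normal_density (\<Sum>b\<in>I. 0) (sqrt (\<Sum>b\<in>I. (\<bar>b \<bullet> u\<bar> * \<sigma>)\<^sup>2)))"
      by (rule P.sum_indep_normal[OF Ifin Ine indI]) (use distb \<sigma> in \<open>auto simp: I_def\<close>)
    moreover have "sqrt (\<Sum>b\<in>I. (\<bar>b \<bullet> u\<bar> * \<sigma>)\<^sup>2) = \<sigma>"
    proof -
      have "(\<Sum>b\<in>I. (\<bar>b \<bullet> u\<bar> * \<sigma>)\<^sup>2) = \<sigma>\<^sup>2 * (\<Sum>b\<in>I. (b \<bullet> u)\<^sup>2)"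
        by (simp add: sum_distrib_left power_mult_distrib mult.commute)
      also have "(\<Sum>b\<in>I. (b \<bullet> u)\<^sup>2) = (\<Sum>b\<in>(Basis::'a set). (b \<bullet> u)\<^sup>2)"
        unfolding I_def by (rule sum.mono_neutral_left) auto
      also have "\<dots> = u \<bullet> u" by (subst euclidean_inner[of u u]) (simp add: power2_eq_square inner_commute)
      also have "\<dots> = 1" using u by (simp add: power2_norm_eq_inner[symmetric])
      finally show ?thesis using \<sigma> by simp
    qed
    ultimately have "distributed ?Pi lborel (\<lambda>f. \<Sum>b\<in>I. (b \<bullet> u) * f b) (normal_density 0 \<sigma>)"
      by simp
    then have "distr ?Pi lborel (\<lambda>f. \<Sum>b\<in>I. (b \<bullet> u) * f b) = density lborel (\<lambda>x. ennreal (normal_density 0 \<sigma> x))"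
      unfolding distributed_def by simp
    then show ?thesis by (subst distr_cong[OF refl sets_lborel[symmetric] refl]) simp_all
  qed
  finally show ?thesis .
qed

lemma gauss_vec_prob: "\<sigma> > 0 \<Longrightarrow> prob_space (gauss_vec \<sigma> :: 'a::euclidean_space measure)"
  unfolding gauss_vec_prod
  by (intro prob_space.prob_space_distr prob_space_PiM prob_space_normal_density) auto

lemma sets_gauss_vec[simp, measurable_cong]: "sets (gauss_vec \<sigma>) = sets borel"
  unfolding gauss_vec_def by simp

lemma normal_density_measurable2[measurable (raw)]:
  assumes [measurable]: "f \<in> borel_measurable M" "g \<in> borel_measurable M"
  shows "(\<lambda>x. normal_density (f x) \<sigma> (g x)) \<in> borel_measurable M"
  unfolding normal_density_def by measurable

lemma lborel_shift_nn:
  fixes h :: "real \<Rightarrow> ennreal"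
  assumes [measurable]: "h \<in> borel_measurable borel"
  shows "(\<integral>\<^sup>+ t. h (c + t) \<partial>lborel) = (\<integral>\<^sup>+ z. h z \<partial>lborel)"
proof -
  have "(\<integral>\<^sup>+ z. h z \<partial>lborel) = (\<integral>\<^sup>+ z. h z \<partial>distr lborel borel ((+) c))"
    by (simp add: lborel_distr_plus)
  also have "\<dots> = (\<integral>\<^sup>+ t. h (c + t) \<partial>lborel)"
    by (subst nn_integral_distr) auto
  finally show ?thesis by simp
qed

lemma mech_proj:
  fixes F :: "'x \<Rightarrow> 'a::euclidean_space"
  assumes M: "prob_space M" and F[measurable]: "F \<in> borel_measurable M"
    and \<sigma>: "\<sigma> > 0" and u: "norm u = 1"
  shows "distr (distr (M \<Otimes>\<^sub>M gauss_vec \<sigma>) borel (\<lambda>(x, n). F x + n)) borel (\<lambda>a. a \<bullet> u)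
     = density lborel (\<lambda>z. \<integral>\<^sup>+ a. ennreal (normal_density a \<sigma> z) \<partial>(distr M borel (\<lambda>x. F x \<bullet> u)))"
  (is "?L = density lborel ?p")
proof -
  let ?G = "gauss_vec \<sigma> :: 'a measure"
  let ?\<mu> = "distr M borel (\<lambda>x. F x \<bullet> u)"
  interpret G: prob_space ?G by (rule gauss_vec_prob[OF \<sigma>])
  interpret Mu: prob_space ?\<mu> by (rule prob_space.prob_space_distr[OF M]) simp
  interpret MuL: pair_sigma_finite ?\<mu> lborel
    by (simp add: pair_sigma_finite_def Mu.sigma_finite_measure_axioms sigma_finite_lborel)
  have nd_shift: "normal_density 0 \<sigma> (z - c) = normal_density c \<sigma> z" for c z
    by (simp add: normal_density_def)
  show ?thesis
  proof (rule measure_eqI)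
    fix A :: "real set" assume "A \<in> sets ?L"
    then have A[measurable]: "A \<in> sets borel" by simp
    have "emeasure ?L A = (\<integral>\<^sup>+ a. indicator A a \<partial>?L)" by simp
    also have "\<dots> = (\<integral>\<^sup>+ p. indicator A ((F (fst p) + snd p) \<bullet> u) \<partial>(M \<Otimes>\<^sub>M ?G))"
      by (subst nn_integral_distr; simp?)+ (auto intro!: nn_integral_cong simp: split_beta')
    also have "\<dots> = (\<integral>\<^sup>+ x. \<integral>\<^sup>+ n. indicator A (F x \<bullet> u + n \<bullet> u) \<partial>?G \<partial>M)"
      by (subst G.nn_integral_fst[symmetric]) (auto simp: inner_add_left)
    also have "\<dots> = (\<integral>\<^sup>+ x. (\<lambda>c. \<integral>\<^sup>+ z. ennreal (normal_density c \<sigma> z) * indicator A z \<partial>lborel) (F x \<bullet> u) \<partial>M)"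
    proof (intro nn_integral_cong)
      fix x
      let ?c = "F x \<bullet> u"
      have "(\<integral>\<^sup>+ n. indicator A (?c + n \<bullet> u) \<partial>?G) = (\<integral>\<^sup>+ t. indicator A (?c + t) \<partial>distr ?G borel (\<lambda>n. n \<bullet> u))"
        by (subst nn_integral_distr) auto
      also have "\<dots> = (\<integral>\<^sup>+ t. ennreal (normal_density 0 \<sigma> t) * indicator A (?c + t) \<partial>lborel)"
        unfolding gauss_proj[OF \<sigma> u] by (subst nn_integral_density) auto
      also have "\<dots> = (\<integral>\<^sup>+ t. (\<lambda>z. ennreal (normal_density 0 \<sigma> (z - ?c)) * indicator A z) (?c + t) \<partial>lborel)"
        by simp
      also have "\<dots> = (\<integral>\<^sup>+ z. ennreal (normal_density 0 \<sigma> (z - ?c)) * indicator A z \<partial>lborel)"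
        by (rule lborel_shift_nn) measurable
      finally show "(\<integral>\<^sup>+ n. indicator A (?c + n \<bullet> u) \<partial>?G) = (\<lambda>c. \<integral>\<^sup>+ z. ennreal (normal_density c \<sigma> z) * indicator A z \<partial>lborel) ?c"
        by (simp add: nd_shift)
    qed
    also have "\<dots> = (\<integral>\<^sup>+ c. \<integral>\<^sup>+ z. ennreal (normal_density c \<sigma> z) * indicator A z \<partial>lborel \<partial>?\<mu>)"
      by (subst nn_integral_distr) (auto intro!: lborel.borel_measurable_nn_integral simp: split_beta')
    also have "\<dots> = (\<integral>\<^sup>+ z. \<integral>\<^sup>+ c. ennreal (normal_density c \<sigma> z) * indicator A z \<partial>?\<mu> \<partial>lborel)"
      by (rule MuL.Fubini'[symmetric]) measurable
    also have "\<dots> = (\<integral>\<^sup>+ z. ?p z * indicator A z \<partial>lborel)"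
      by (intro nn_integral_cong) (simp add: nn_integral_multc)
    also have "\<dots> = emeasure (density lborel ?p) A"
      by (subst emeasure_density) auto
    finally show "emeasure ?L A = emeasure (density lborel ?p) A" .
  qed simp
qed

lemma nd_renyi_pointwise:
  assumes \<sigma>: "\<sigma> > 0"
  shows "normal_density x \<sigma> z powr \<alpha> * normal_density y \<sigma> z powr (1 - \<alpha>) =
    exp (\<alpha> * (\<alpha> - 1) * (x - y)\<^sup>2 / (2 * \<sigma>\<^sup>2)) * normal_density (\<alpha> * x + (1 - \<alpha>) * y) \<sigma> z"
proof -
  define C where "C = 1 / sqrt (2 * pi * \<sigma>\<^sup>2)"
  have C: "C > 0" unfolding C_def using \<sigma> by simp
  define E1 where "E1 = -(z - x)\<^sup>2 / (2 * \<sigma>\<^sup>2)"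
  define E2 where "E2 = -(z - y)\<^sup>2 / (2 * \<sigma>\<^sup>2)"
  have "normal_density x \<sigma> z powr \<alpha> * normal_density y \<sigma> z powr (1 - \<alpha>)
      = (C * exp E1) powr \<alpha> * (C * exp E2) powr (1 - \<alpha>)"
    by (simp add: normal_density_def C_def E1_def E2_def)
  also have "\<dots> = (C powr \<alpha> * C powr (1 - \<alpha>)) * (exp E1 powr \<alpha> * exp E2 powr (1 - \<alpha>))"
    using C by (simp add: powr_mult)
  also have "C powr \<alpha> * C powr (1 - \<alpha>) = C"
    using C by (simp add: powr_add[symmetric])
  also have "exp E1 powr \<alpha> * exp E2 powr (1 - \<alpha>) = exp (\<alpha> * E1 + (1 - \<alpha>) * E2)"
    by (simp add: powr_def exp_add[symmetric] mult.commute)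
  also have "\<alpha> * E1 + (1 - \<alpha>) * E2 = \<alpha> * (\<alpha> - 1) * (x - y)\<^sup>2 / (2 * \<sigma>\<^sup>2) + (-(z - (\<alpha> * x + (1 - \<alpha>) * y))\<^sup>2 / (2 * \<sigma>\<^sup>2))"
    unfolding E1_def E2_def using \<sigma> by (simp add: field_simps power2_eq_square)
  finally show ?thesis
    unfolding exp_add by (simp add: normal_density_def C_def)
qed

lemma nd_renyi_integral:
  assumes \<sigma>: "\<sigma> > 0"
  shows "(\<integral>\<^sup>+ z. ennreal (normal_density x \<sigma> z powr \<alpha> * normal_density y \<sigma> z powr (1 - \<alpha>)) \<partial>lborel) =
    ennreal (exp (\<alpha> * (\<alpha> - 1) * (x - y)\<^sup>2 / (2 * \<sigma>\<^sup>2)))"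
proof -
  let ?m = "\<alpha> * x + (1 - \<alpha>) * y"
  have one: "(\<integral>\<^sup>+ z. ennreal (normal_density ?m \<sigma> z) \<partial>lborel) = 1"
    using prob_space.emeasure_space_1[OF prob_space_normal_density[OF \<sigma>, of ?m]]
    by (simp add: emeasure_density)
  show ?thesis
    unfolding nd_renyi_pointwise[OF \<sigma>]
    by (simp add: ennreal_mult' nn_integral_cmult one)
qed

lemma young_holder_pt:
  fixes a b I J \<alpha> :: real
  assumes a: "a > 0" and b: "b > 0" and I: "I > 0" and J: "J > 0" and \<alpha>: "\<alpha> > 1"
  shows "a / (I powr (1/\<alpha>) * J powr (1 - 1/\<alpha>)) \<le>
     (1/\<alpha>) * ((a powr \<alpha> * b powr (1 - \<alpha>)) / I) + (1 - 1/\<alpha>) * (b / J)"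
proof -
  let ?H = "a powr \<alpha> * b powr (1 - \<alpha>)"
  have H: "?H > 0" using a b by simp
  have "(?H / I) powr (1/\<alpha>) * (b / J) powr (1 - 1/\<alpha>) \<le> (1/\<alpha>) * (?H / I) + (1 - 1/\<alpha>) * (b / J)"
    by (rule Youngs_inequality_0) (use \<alpha> H I b J in auto)
  moreover have "(?H / I) powr (1/\<alpha>) * (b / J) powr (1 - 1/\<alpha>) = a / (I powr (1/\<alpha>) * J powr (1 - 1/\<alpha>))"
  proof -
    have "(?H / I) powr (1/\<alpha>) = (a powr \<alpha>) powr (1/\<alpha>) * (b powr (1 - \<alpha>)) powr (1/\<alpha>) / I powr (1/\<alpha>)"
      using a b I H by (simp add: powr_divide powr_mult)
    also have "(a powr \<alpha>) powr (1/\<alpha>) = a" using a \<alpha> by (simp add: powr_powr)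
    also have "(b powr (1 - \<alpha>)) powr (1/\<alpha>) = b powr ((1 - \<alpha>) / \<alpha>)" using b by (simp add: powr_powr)
    finally have 1: "(?H / I) powr (1/\<alpha>) = a * b powr ((1 - \<alpha>) / \<alpha>) / I powr (1/\<alpha>)" .
    have 2: "(b / J) powr (1 - 1/\<alpha>) = b powr (1 - 1/\<alpha>) / J powr (1 - 1/\<alpha>)"
      using b J by (simp add: powr_divide)
    have 3: "b powr ((1 - \<alpha>) / \<alpha>) * b powr (1 - 1/\<alpha>) = 1"
    proof -
      have "b powr ((1 - \<alpha>) / \<alpha>) * b powr (1 - 1/\<alpha>) = b powr ((1 - \<alpha>) / \<alpha> + (1 - 1/\<alpha>))"
        by (simp add: powr_add)
      also have "(1 - \<alpha>) / \<alpha> + (1 - 1/\<alpha>) = 0" using \<alpha> by (simp add: field_simps)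
      finally show ?thesis using b by simp
    qed
    show ?thesis unfolding 1 2 using 3 by (simp add: field_simps)
  qed
  ultimately show ?thesis by simp
qed

lemma holder_nn:
  fixes A B :: "'w \<Rightarrow> real"
  assumes \<pi>: "prob_space \<pi>" and Am[measurable]: "A \<in> borel_measurable \<pi>" and Bm[measurable]: "B \<in> borel_measurable \<pi>"
    and Apos: "\<And>w. A w > 0" and Abd: "\<And>w. A w \<le> CA"
    and Bpos: "\<And>w. B w > 0" and Bbd: "\<And>w. B w \<le> CB" and \<alpha>: "\<alpha> > 1"
  shows "ennreal ((\<integral>w. A w \<partial>\<pi>) powr \<alpha> * (\<integral>w. B w \<partial>\<pi>) powr (1 - \<alpha>))
      \<le> (\<integral>\<^sup>+ w. ennreal (A w powr \<alpha> * B w powr (1 - \<alpha>)) \<partial>\<pi>)"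
proof (cases "(\<integral>\<^sup>+ w. ennreal (A w powr \<alpha> * B w powr (1 - \<alpha>)) \<partial>\<pi>) = \<infinity>")
  case True then show ?thesis by simp
next
  case False
  interpret prob_space \<pi> by fact
  let ?H = "\<lambda>w. A w powr \<alpha> * B w powr (1 - \<alpha>)"
  have Hm[measurable]: "?H \<in> borel_measurable \<pi>" by measurable
  have Hpos: "?H w > 0" for w using Apos[of w] Bpos[of w] by simp
  have Hint: "integrable \<pi> ?H"
    by (rule integrableI_nonneg) (use Hpos False in \<open>auto simp: top.not_eq_extremum\<close>)
  have Aint: "integrable \<pi> A"
    by (rule integrable_const_bound[where B=CA]) (use Apos Abd in \<open>auto intro!: AE_I2 simp: abs_of_pos\<close>)
  have Bint: "integrable \<pi> B"
    by (rule integrable_const_bound[where B=CB]) (use Bpos Bbd in \<open>auto intro!: AE_I2 simp: abs_of_pos\<close>)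
  have pos: "(\<integral>w. f w \<partial>\<pi>) > 0" if "integrable \<pi> f" "\<And>w. f w > 0" for f :: "'w \<Rightarrow> real"
  proof -
    have "(\<integral>w. f w \<partial>\<pi>) \<ge> 0" using that by (simp add: integral_nonneg less_imp_le)
    moreover have "(\<integral>w. f w \<partial>\<pi>) \<noteq> 0"
    proof
      assume "(\<integral>w. f w \<partial>\<pi>) = 0"
      then have "AE w in \<pi>. f w = 0"
      proof -
        have "AE w in \<pi>. 0 \<le> f w" using that(2) by (auto intro!: AE_I2 less_imp_le)
        then show ?thesis using integral_nonneg_eq_0_iff_AE[OF that(1)] \<open>(\<integral>w. f w \<partial>\<pi>) = 0\<close> by simp
      qed
      then have "AE w in \<pi>. False" using that(2) by (auto elim: AE_mp[OF _ AE_I2] simp: less_le)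
      then show False by simp
    qed
    ultimately show ?thesis by simp
  qed
  define I where "I = (\<integral>w. ?H w \<partial>\<pi>)"
  define J where "J = (\<integral>w. B w \<partial>\<pi>)"
  define Ia where "Ia = (\<integral>w. A w \<partial>\<pi>)"
  have I: "I > 0" unfolding I_def by (rule pos[OF Hint Hpos])
  have J: "J > 0" unfolding J_def by (rule pos[OF Bint Bpos])
  have Ia: "Ia > 0" unfolding Ia_def by (rule pos[OF Aint Apos])
  define K where "K = I powr (1/\<alpha>) * J powr (1 - 1/\<alpha>)"
  have K: "K > 0" unfolding K_def using I J by simp
  have "Ia / K = (\<integral>w. A w / K \<partial>\<pi>)" unfolding Ia_def by simp
  also have "\<dots> \<le> (\<integral>w. (1/\<alpha>) * (?H w / I) + (1 - 1/\<alpha>) * (B w / J) \<partial>\<pi>)"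
    by (rule integral_mono) (use Aint Hint Bint young_holder_pt[OF Apos Bpos I J \<alpha>] K_def in auto)
  also have "\<dots> = (1/\<alpha>) * (I / I) + (1 - 1/\<alpha>) * (J / J)"
    using Hint Bint by (simp add: I_def J_def)
  also have "\<dots> = 1" using I J by simp
  finally have "Ia \<le> K" using K by (simp add: divide_le_eq)
  then have "Ia powr \<alpha> \<le> K powr \<alpha>" using Ia \<alpha> by (intro powr_mono2) auto
  also have "K powr \<alpha> = I * J powr (\<alpha> - 1)"
  proof -
    have "K powr \<alpha> = (I powr (1/\<alpha>)) powr \<alpha> * (J powr (1 - 1/\<alpha>)) powr \<alpha>"
      unfolding K_def using I J by (simp add: powr_mult)
    also have "\<dots> = I powr (1/\<alpha> * \<alpha>) * J powr ((1 - 1/\<alpha>) * \<alpha>)" by (simp add: powr_powr)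
    also have "1/\<alpha> * \<alpha> = 1" using \<alpha> by simp
    also have "(1 - 1/\<alpha>) * \<alpha> = \<alpha> - 1" using \<alpha> by (simp add: field_simps)
    finally show ?thesis using I by simp
  qed
  finally have "Ia powr \<alpha> * J powr (1 - \<alpha>) \<le> I * J powr (\<alpha> - 1) * J powr (1 - \<alpha>)"
    using J by (intro mult_right_mono) auto
  also have "\<dots> = I" using J by (simp add: mult.assoc powr_add[symmetric])
  finally have "Ia powr \<alpha> * J powr (1 - \<alpha>) \<le> I" .
  moreover have "(\<integral>\<^sup>+ w. ennreal (?H w) \<partial>\<pi>) = ennreal I"
    unfolding I_def by (rule nn_integral_eq_integral[OF Hint]) (use Hpos in \<open>auto intro: less_imp_le\<close>)
  ultimately show ?thesis unfolding Ia_def J_def by (simp add: ennreal_leI)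
qed

lemma integral_pos_prob:
  fixes f :: "'w \<Rightarrow> real"
  assumes "prob_space \<pi>" "integrable \<pi> f" "\<And>w. f w > 0"
  shows "(\<integral>w. f w \<partial>\<pi>) > 0"
proof -
  interpret prob_space \<pi> by fact
  have "(\<integral>w. f w \<partial>\<pi>) \<ge> 0" using assms by (simp add: integral_nonneg less_imp_le)
  moreover have "(\<integral>w. f w \<partial>\<pi>) \<noteq> 0"
  proof
    assume 0: "(\<integral>w. f w \<partial>\<pi>) = 0"
    have "AE w in \<pi>. 0 \<le> f w" using assms(3) by (auto intro!: AE_I2 less_imp_le)
    then have "AE w in \<pi>. f w = 0" using integral_nonneg_eq_0_iff_AE[OF assms(2)] 0 by simp
    then have "AE w in \<pi>. False" using assms(3) by (auto elim: AE_mp[OF _ AE_I2] simp: less_le)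
    then show False by simp
  qed
  ultimately show ?thesis by simp
qed

lemma nd_le: "\<sigma> > 0 \<Longrightarrow> normal_density m \<sigma> z \<le> 1 / sqrt (2 * pi * \<sigma>\<^sup>2)"
proof -
  assume \<sigma>: "\<sigma> > 0"
  have "exp (-(z - m)\<^sup>2 / (2 * \<sigma>\<^sup>2)) \<le> 1" using \<sigma> by simp
  then show ?thesis unfolding normal_density_def using \<sigma>
    by (intro mult_left_le) auto
qed

lemma renyi_coupling_bound:
  fixes \<pi> :: "(real \<times> real) measure"
  assumes \<pi>: "prob_space \<pi>" and sets\<pi>: "sets \<pi> = sets borel" and \<sigma>: "\<sigma> > 0" and \<alpha>: "\<alpha> > 1"
    and r: "AE w in \<pi>. \<bar>fst w - snd w\<bar> \<le> r"
  shows "renyi_moment \<alpha> (density lborel (\<lambda>z. \<integral>\<^sup>+ w. ennreal (normal_density (fst w) \<sigma> z) \<partial>\<pi>))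
                       (density lborel (\<lambda>z. \<integral>\<^sup>+ w. ennreal (normal_density (snd w) \<sigma> z) \<partial>\<pi>))
      \<le> ennreal (exp (\<alpha> * (\<alpha> - 1) * r\<^sup>2 / (2 * \<sigma>\<^sup>2)))"
proof -
  interpret prob_space \<pi> by fact
  interpret PL: pair_sigma_finite \<pi> lborel
    by (simp add: pair_sigma_finite_def sigma_finite_measure_axioms sigma_finite_lborel)
  have [measurable_cong]: "sets \<pi> = sets borel" by fact
  have fstm[measurable]: "fst \<in> borel_measurable \<pi>"
    by (subst measurable_cong_sets[OF sets\<pi> refl]) (simp add: borel_prod[symmetric])
  have sndm[measurable]: "snd \<in> borel_measurable \<pi>"
    by (subst measurable_cong_sets[OF sets\<pi> refl]) (simp add: borel_prod[symmetric])
  define Cm where "Cm = 1 / sqrt (2 * pi * \<sigma>\<^sup>2)"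
  have ndle: "normal_density m \<sigma> z \<le> Cm" for m z unfolding Cm_def using nd_le[OF \<sigma>] .
  have ndpos: "normal_density m \<sigma> z > 0" for m z using normal_density_pos[OF \<sigma>] .
  define pr where "pr z = (\<integral>w. normal_density (fst w) \<sigma> z \<partial>\<pi>)" for z
  define qr where "qr z = (\<integral>w. normal_density (snd w) \<sigma> z \<partial>\<pi>)" for z
  have intg: "integrable \<pi> (\<lambda>w. normal_density (g w) \<sigma> z)" if [measurable]: "g \<in> borel_measurable \<pi>" for g z
    by (rule integrable_const_bound[where B=Cm]) (auto intro!: AE_I2 simp: ndle abs_of_nonneg)
  have p_eq: "(\<integral>\<^sup>+ w. ennreal (normal_density (fst w) \<sigma> z) \<partial>\<pi>) = ennreal (pr z)" for z
    unfolding pr_def by (rule nn_integral_eq_integral[OF intg]) auto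
  have q_eq: "(\<integral>\<^sup>+ w. ennreal (normal_density (snd w) \<sigma> z) \<partial>\<pi>) = ennreal (qr z)" for z
    unfolding qr_def by (rule nn_integral_eq_integral[OF intg]) auto
  have prpos: "pr z > 0" for z unfolding pr_def by (rule integral_pos_prob[OF \<pi> intg ndpos]) simp
  have qrpos: "qr z > 0" for z unfolding qr_def by (rule integral_pos_prob[OF \<pi> intg ndpos]) simp
  have pm_nn: "(\<lambda>z. \<integral>\<^sup>+ w. ennreal (normal_density (fst w) \<sigma> z) \<partial>\<pi>) \<in> borel_measurable borel"
    by measurable
  have qm_nn: "(\<lambda>z. \<integral>\<^sup>+ w. ennreal (normal_density (snd w) \<sigma> z) \<partial>\<pi>) \<in> borel_measurable borel"
    by measurable
  have prm[measurable]: "pr \<in> borel_measurable borel"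
  proof -
    have "(\<lambda>z. enn2real (\<integral>\<^sup>+ w. ennreal (normal_density (fst w) \<sigma> z) \<partial>\<pi>)) \<in> borel_measurable borel"
      using pm_nn by measurable
    then show ?thesis unfolding p_eq using prpos by (simp add: less_imp_le)
  qed
  have qrm[measurable]: "qr \<in> borel_measurable borel"
  proof -
    have "(\<lambda>z. enn2real (\<integral>\<^sup>+ w. ennreal (normal_density (snd w) \<sigma> z) \<partial>\<pi>)) \<in> borel_measurable borel"
      using qm_nn by measurable
    then show ?thesis unfolding q_eq using qrpos by (simp add: less_imp_le)
  qed
  let ?P = "density lborel (\<lambda>z. ennreal (pr z))"
  let ?Q = "density lborel (\<lambda>z. ennreal (qr z))"
  have PQ: "density lborel (\<lambda>z. \<integral>\<^sup>+ w. ennreal (normal_density (fst w) \<sigma> z) \<partial>\<pi>) = ?P"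
           "density lborel (\<lambda>z. \<integral>\<^sup>+ w. ennreal (normal_density (snd w) \<sigma> z) \<partial>\<pi>) = ?Q"
    by (simp_all add: p_eq q_eq)
  have Pdens: "?P = density ?Q (\<lambda>z. ennreal (pr z / qr z))"
  proof -
    have qrne: "qr z \<noteq> 0" for z using qrpos[of z] by simp
    have "density ?Q (\<lambda>z. ennreal (pr z / qr z)) = density lborel (\<lambda>z. ennreal (qr z) * ennreal (pr z / qr z))"
      by (rule density_density_eq) auto
    also have "\<dots> = ?P"
      by (intro density_cong AE_I2 refl) (auto simp: ennreal_mult'[symmetric] qrpos less_imp_le qrne)
    finally show ?thesis by simp
  qed
  interpret Q: sigma_finite_measure ?Q
    by (subst sigma_finite_measure.sigma_finite_iff_density_finite[OF sigma_finite_lborel]) auto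
  have RN: "AE z in ?Q. ennreal (pr z / qr z) = RN_deriv ?Q ?P z"
    by (rule Q.RN_deriv_unique) (auto simp: Pdens)
  have ac: "absolutely_continuous ?Q ?P"
    unfolding absolutely_continuous_def
  proof
    fix N assume "N \<in> null_sets ?Q"
    then have N: "N \<in> sets borel" "AE z in lborel. z \<in> N \<longrightarrow> ennreal (qr z) = 0"
      by (subst (asm) null_sets_density_iff; simp)+
    from N(2) have "AE z in lborel. z \<notin> N"
    proof eventually_elim
      case (elim z) then show ?case using qrpos[of z] by auto
    qed
    then have "AE z in lborel. z \<in> N \<longrightarrow> ennreal (pr z) = 0"
      by eventually_elim auto
    then show "N \<in> null_sets ?P" using N by (subst null_sets_density_iff) auto
  qed
  have "renyi_moment \<alpha> ?P ?Q = (\<integral>\<^sup>+ z. ennreal (enn2real (RN_deriv ?Q ?P z) powr \<alpha>) \<partial>?Q)"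
    unfolding renyi_moment_def using ac by simp
  also have "\<dots> = (\<integral>\<^sup>+ z. ennreal ((pr z / qr z) powr \<alpha>) \<partial>?Q)"
  proof (rule nn_integral_cong_AE)
    show "AE z in ?Q. ennreal (enn2real (RN_deriv ?Q ?P z) powr \<alpha>) = ennreal ((pr z / qr z) powr \<alpha>)"
      using RN
    proof eventually_elim
      case (elim z)
      have "enn2real (RN_deriv ?Q ?P z) = pr z / qr z"
        using elim[symmetric] prpos[of z] qrpos[of z] by simp
      then show ?case by simp
    qed
  qed
  also have "\<dots> = (\<integral>\<^sup>+ z. ennreal (qr z) * ennreal ((pr z / qr z) powr \<alpha>) \<partial>lborel)"
    by (subst nn_integral_density) auto
  also have "\<dots> = (\<integral>\<^sup>+ z. ennreal (pr z powr \<alpha> * qr z powr (1 - \<alpha>)) \<partial>lborel)"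
  proof (intro nn_integral_cong)
    fix z
    have "qr z * (pr z / qr z) powr \<alpha> = pr z powr \<alpha> * (qr z / qr z powr \<alpha>)"
      using prpos[of z] qrpos[of z] by (simp add: powr_divide)
    also have "qr z / qr z powr \<alpha> = qr z powr (1 - \<alpha>)"
      using qrpos[of z] by (simp add: powr_diff)
    finally show "ennreal (qr z) * ennreal ((pr z / qr z) powr \<alpha>) = ennreal (pr z powr \<alpha> * qr z powr (1 - \<alpha>))"
      using qrpos[of z] by (simp add: ennreal_mult'[symmetric])
  qed
  also have "\<dots> \<le> (\<integral>\<^sup>+ z. \<integral>\<^sup>+ w. ennreal (normal_density (fst w) \<sigma> z powr \<alpha> * normal_density (snd w) \<sigma> z powr (1 - \<alpha>)) \<partial>\<pi> \<partial>lborel)"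
  proof (intro nn_integral_mono)
    fix z
    show "ennreal (pr z powr \<alpha> * qr z powr (1 - \<alpha>)) \<le> (\<integral>\<^sup>+ w. ennreal (normal_density (fst w) \<sigma> z powr \<alpha> * normal_density (snd w) \<sigma> z powr (1 - \<alpha>)) \<partial>\<pi>)"
      unfolding pr_def qr_def
      by (rule holder_nn[OF \<pi> _ _ ndpos ndle ndpos ndle \<alpha>]) measurable
  qed
  also have "\<dots> = (\<integral>\<^sup>+ w. \<integral>\<^sup>+ z. ennreal (normal_density (fst w) \<sigma> z powr \<alpha> * normal_density (snd w) \<sigma> z powr (1 - \<alpha>)) \<partial>lborel \<partial>\<pi>)"
    by (rule PL.Fubini') measurable
  also have "\<dots> = (\<integral>\<^sup>+ w. ennreal (exp (\<alpha> * (\<alpha> - 1) * (fst w - snd w)\<^sup>2 / (2 * \<sigma>\<^sup>2))) \<partial>\<pi>)"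
    by (simp add: nd_renyi_integral[OF \<sigma>])
  also have "\<dots> \<le> (\<integral>\<^sup>+ w. ennreal (exp (\<alpha> * (\<alpha> - 1) * r\<^sup>2 / (2 * \<sigma>\<^sup>2))) \<partial>\<pi>)"
  proof (rule nn_integral_mono_AE)
    show "AE w in \<pi>. ennreal (exp (\<alpha> * (\<alpha> - 1) * (fst w - snd w)\<^sup>2 / (2 * \<sigma>\<^sup>2))) \<le> ennreal (exp (\<alpha> * (\<alpha> - 1) * r\<^sup>2 / (2 * \<sigma>\<^sup>2)))"
      using r
    proof (rule AE_mp, intro AE_I2 impI)
      fix w assume "\<bar>fst w - snd w\<bar> \<le> r"
      then have "(fst w - snd w)\<^sup>2 \<le> r\<^sup>2"
        by (metis abs_ge_zero abs_le_square_iff abs_of_nonneg order_trans)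
      moreover have "\<alpha> * (\<alpha> - 1) / (2 * \<sigma>\<^sup>2) \<ge> 0" using \<alpha> by simp
      ultimately have "\<alpha> * (\<alpha> - 1) / (2 * \<sigma>\<^sup>2) * (fst w - snd w)\<^sup>2 \<le> \<alpha> * (\<alpha> - 1) / (2 * \<sigma>\<^sup>2) * r\<^sup>2"
        by (rule mult_left_mono)
      then show "ennreal (exp (\<alpha> * (\<alpha> - 1) * (fst w - snd w)\<^sup>2 / (2 * \<sigma>\<^sup>2))) \<le> ennreal (exp (\<alpha> * (\<alpha> - 1) * r\<^sup>2 / (2 * \<sigma>\<^sup>2)))"
        by (intro ennreal_leI) (simp add: field_simps)
    qed
  qed
  also have "\<dots> = ennreal (exp (\<alpha> * (\<alpha> - 1) * r\<^sup>2 / (2 * \<sigma>\<^sup>2)))"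
    by (simp add: emeasure_space_1)
  finally show ?thesis unfolding PQ .
qed

lemma msupp_AE:
  fixes \<pi> :: "(real \<times> real) measure"
  assumes sets\<pi>: "sets \<pi> = sets borel"
    and sup: "(SUP z\<in>msupp \<pi>. ereal \<bar>fst z - snd z\<bar>) < ereal r"
  shows "AE w in \<pi>. \<bar>fst w - snd w\<bar> \<le> r"
proof -
  define \<F> where "\<F> = {ball z e | z e. e > 0 \<and> emeasure \<pi> (ball z e) = 0}"
  have "\<And>S. S \<in> \<F> \<Longrightarrow> open S" unfolding \<F>_def by auto
  then obtain \<F>' where F': "\<F>' \<subseteq> \<F>" "countable \<F>'" "\<Union>\<F>' = \<Union>\<F>"
    using Lindelof by metis
  have null: "\<Union>\<F>' \<in> null_sets \<pi>"
  proof -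
    have "(\<Union>S\<in>\<F>'. S) \<in> null_sets \<pi>"
    proof (rule null_sets_UN'[OF F'(2)])
      fix S assume "S \<in> \<F>'"
      then have "S \<in> \<F>" using F'(1) by auto
      then obtain z e where "S = ball z e" "emeasure \<pi> (ball z e) = 0" unfolding \<F>_def by auto
      moreover have "ball z e \<in> sets \<pi>" using sets\<pi> by simp
      ultimately show "S \<in> null_sets \<pi>" by auto
    qed
    then show ?thesis by simp
  qed
  show ?thesis
  proof (rule AE_I'[OF null], safe)
    fix w assume w: "w \<in> space \<pi>" "\<not> \<bar>fst w - snd w\<bar> \<le> r"
    have "w \<notin> msupp \<pi>"
    proof
      assume "w \<in> msupp \<pi>"
      then have "ereal \<bar>fst w - snd w\<bar> \<le> (SUP z\<in>msupp \<pi>. ereal \<bar>fst z - snd z\<bar>)"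
        by (rule SUP_upper)
      with sup have "ereal \<bar>fst w - snd w\<bar> < ereal r" by (rule le_less_trans[rotated])
      with w(2) show False by simp
    qed
    then obtain e where e: "e > 0" "\<not> emeasure \<pi> (ball w e) > 0" unfolding msupp_def by auto
    then have "ball w e \<in> \<F>" unfolding \<F>_def by (auto simp: not_less) (metis prod.collapse)
    then have "w \<in> \<Union>\<F>" using e(1) by (metis UnionI centre_in_ball)
    then show "w \<in> \<Union>\<F>'" using F'(3) by simp
  qed
qed

lemma moment_limit:
  fixes M :: ennreal and c D :: real
  assumes "\<And>\<delta>. \<delta> > 0 \<Longrightarrow> M \<le> ennreal (exp (c * (D + \<delta>)\<^sup>2))"
  shows "M \<le> ennreal (exp (c * D\<^sup>2))"
proof -
  have Mfin: "M \<noteq> \<infinity>" using assms[of 1] by (auto simp: top_unique)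
  obtain M' where MM: "M = ennreal M'" "M' \<ge> 0" using Mfin by (cases M) auto
  have le: "M' \<le> exp (c * (D + \<delta>)\<^sup>2)" if "\<delta> > 0" for \<delta>
    using assms[OF that] unfolding MM(1) by (simp add: ennreal_le_iff)
  have "M' \<le> exp (c * (D + 0)\<^sup>2)"
  proof (rule tendsto_le[of "at_right (0::real)"])
    show "((\<lambda>\<delta>. exp (c * (D + \<delta>)\<^sup>2)) \<longlongrightarrow> exp (c * (D + 0)\<^sup>2)) (at_right 0)"
      by (intro tendsto_intros)
    show "((\<lambda>\<delta>. M') \<longlongrightarrow> M') (at_right 0)" by simp
    show "\<forall>\<^sub>F \<delta> in at_right 0. M' \<le> exp (c * (D + \<delta>)\<^sup>2)"
      using eventually_at_right_less[of "0::real"] by eventually_elim (rule le)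
  qed simp
  then show ?thesis unfolding MM(1) by (simp add: ennreal_leI)
qed

lemma mech_proj_coupling:
  fixes f :: "'x \<Rightarrow> 'a::euclidean_space" and g :: "'w \<Rightarrow> real"
  assumes M: "prob_space M" and F[measurable]: "f \<in> borel_measurable M"
    and \<sigma>: "\<sigma> > 0" and u: "norm u = 1"
    and marg: "distr \<pi> borel g = distr (distr M borel f) borel (\<lambda>a. a \<bullet> u)"
    and gm: "g \<in> borel_measurable \<pi>"
  shows "distr (distr (M \<Otimes>\<^sub>M gauss_vec \<sigma>) borel (\<lambda>(x, n). f x + n)) borel (\<lambda>a. a \<bullet> u)
     = density lborel (\<lambda>z. \<integral>\<^sup>+ w. ennreal (normal_density (g w) \<sigma> z) \<partial>\<pi>)"
proof -
  have "distr M borel (\<lambda>x. f x \<bullet> u) = distr (distr M borel f) borel (\<lambda>a. a \<bullet> u)"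
    by (subst distr_distr) (auto simp: comp_def)
  also have "\<dots> = distr \<pi> borel g" using marg by simp
  finally have eq: "distr M borel (\<lambda>x. f x \<bullet> u) = distr \<pi> borel g" .
  show ?thesis
    unfolding mech_proj[OF M F \<sigma> u] eq
  proof (intro arg_cong[where f="density lborel"] ext)
    fix z
    show "(\<integral>\<^sup>+ a. ennreal (normal_density a \<sigma> z) \<partial>distr \<pi> borel g) = (\<integral>\<^sup>+ w. ennreal (normal_density (g w) \<sigma> z) \<partial>\<pi>)"
      by (rule nn_integral_distr[OF gm]) simp
  qed
qed

lemma mech_slice_bound:
  fixes f :: "'x \<Rightarrow> 'a::euclidean_space" and \<theta> :: "('s, 'x) prior"
  assumes pi: "prob_space (snd \<theta> si)" "sets (snd \<theta> si) = sets MX"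
    and pj: "prob_space (snd \<theta> sj)" "sets (snd \<theta> sj) = sets MX"
    and f_meas: "f \<in> borel_measurable MX" and \<sigma>: "\<sigma> > 0" and \<alpha>: "\<alpha> > 1" and u: "norm u = 1"
    and W: "W_inf (proj_meas u (query_law f \<theta> si)) (proj_meas u (query_law f \<theta> sj)) \<le> ereal D"
  shows "ereal_exp (ereal (\<alpha> - 1) * renyi_div \<alpha> (proj_meas u (gauss_mech_law f \<sigma> \<theta> si))
            (proj_meas u (gauss_mech_law f \<sigma> \<theta> sj)))
         \<le> ennreal (exp (\<alpha> * (\<alpha> - 1) / (2 * \<sigma>\<^sup>2) * D\<^sup>2))"
proof -
  let ?c = "\<alpha> * (\<alpha> - 1) / (2 * \<sigma>\<^sup>2)"
  let ?P = "proj_meas u (gauss_mech_law f \<sigma> \<theta> si)"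
  let ?Q = "proj_meas u (gauss_mech_law f \<sigma> \<theta> sj)"
  have fi: "f \<in> borel_measurable (snd \<theta> si)" by (subst measurable_cong_sets[OF pi(2) refl]) (rule f_meas)
  have fj: "f \<in> borel_measurable (snd \<theta> sj)" by (subst measurable_cong_sets[OF pj(2) refl]) (rule f_meas)
  have mom: "renyi_moment \<alpha> ?P ?Q \<le> ennreal (exp (?c * D\<^sup>2))"
  proof (rule moment_limit)
    fix \<delta> :: real assume \<delta>: "\<delta> > 0"
    have "W_inf (proj_meas u (query_law f \<theta> si)) (proj_meas u (query_law f \<theta> sj)) < ereal (D + \<delta>)"
      using W by (rule le_less_trans) (use \<delta> in simp)
    then have "\<exists>\<pi>\<in>couplings (proj_meas u (query_law f \<theta> si)) (proj_meas u (query_law f \<theta> sj)).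
        (SUP z\<in>msupp \<pi>. ereal \<bar>fst z - snd z\<bar>) < ereal (D + \<delta>)"
      unfolding W_inf_def INF_less_iff .
    then obtain \<pi> where \<pi>: "\<pi> \<in> couplings (proj_meas u (query_law f \<theta> si)) (proj_meas u (query_law f \<theta> sj))"
      and sup: "(SUP z\<in>msupp \<pi>. ereal \<bar>fst z - snd z\<bar>) < ereal (D + \<delta>)"
      by blast
    have \<pi>c: "sets \<pi> = sets (borel :: (real \<times> real) measure) \<and> prob_space \<pi> \<and>
      distr \<pi> borel fst = proj_meas u (query_law f \<theta> si) \<and> distr \<pi> borel snd = proj_meas u (query_law f \<theta> sj)"
      using \<pi> unfolding couplings_def mem_Collect_eq .
    have sets\<pi>: "sets \<pi> = sets borel" using \<pi>c by blast
    have \<pi>prob: "prob_space \<pi>" using \<pi>c by blast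
    have m1: "distr \<pi> borel fst = proj_meas u (query_law f \<theta> si)" using \<pi>c by blast
    have m2: "distr \<pi> borel snd = proj_meas u (query_law f \<theta> sj)" using \<pi>c by blast
    have fstm: "fst \<in> borel_measurable \<pi>"
      by (subst measurable_cong_sets[OF sets\<pi> refl]) (simp add: borel_prod[symmetric])
    have sndm: "snd \<in> borel_measurable \<pi>"
      by (subst measurable_cong_sets[OF sets\<pi> refl]) (simp add: borel_prod[symmetric])
    have P: "?P = density lborel (\<lambda>z. \<integral>\<^sup>+ w. ennreal (normal_density (fst w) \<sigma> z) \<partial>\<pi>)"
      unfolding proj_meas_def gauss_mech_law_def
      by (rule mech_proj_coupling[OF pi(1) fi \<sigma> u _ fstm])
         (use m1 in \<open>simp add: proj_meas_def query_law_def\<close>)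
    have Q: "?Q = density lborel (\<lambda>z. \<integral>\<^sup>+ w. ennreal (normal_density (snd w) \<sigma> z) \<partial>\<pi>)"
      unfolding proj_meas_def gauss_mech_law_def
      by (rule mech_proj_coupling[OF pj(1) fj \<sigma> u _ sndm])
         (use m2 in \<open>simp add: proj_meas_def query_law_def\<close>)
    have "renyi_moment \<alpha> ?P ?Q \<le> ennreal (exp (\<alpha> * (\<alpha> - 1) * (D + \<delta>)\<^sup>2 / (2 * \<sigma>\<^sup>2)))"
      unfolding P Q
      by (rule renyi_coupling_bound[OF \<pi>prob sets\<pi> \<sigma> \<alpha> msupp_AE[OF sets\<pi> sup]])
    then show "renyi_moment \<alpha> ?P ?Q \<le> ennreal (exp (?c * (D + \<delta>)\<^sup>2))"
      by simp
  qed
  have c: "?c \<ge> 0" using \<alpha> by simp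
  have one: "1 \<le> exp (?c * D\<^sup>2)"
  proof -
    have "0 \<le> ?c * D\<^sup>2" using c by (intro mult_nonneg_nonneg) auto
    then show ?thesis by simp
  qed
  show ?thesis
  proof (cases "renyi_moment \<alpha> ?P ?Q = \<infinity>")
    case True then show ?thesis using mom by (simp add: top_unique)
  next
    case False
    define m where "m = enn2real (renyi_moment \<alpha> ?P ?Q)"
    have mm: "renyi_moment \<alpha> ?P ?Q = ennreal m" "m \<ge> 0" unfolding m_def using False
      by (simp_all add: ennreal_enn2real less_top)
    have mle: "m \<le> exp (?c * D\<^sup>2)" using mom mm by (simp add: ennreal_le_iff)
    have rd: "renyi_div \<alpha> ?P ?Q = ereal (ln m / (\<alpha> - 1))"
      unfolding renyi_div_def using False m_def by simp
    have "ereal (\<alpha> - 1) * ereal (ln m / (\<alpha> - 1)) = ereal (ln m)" using \<alpha> by simp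
    then have "ereal_exp (ereal (\<alpha> - 1) * renyi_div \<alpha> ?P ?Q) = ennreal (exp (ln m))"
      unfolding rd ereal_exp_def by simp
    also have "\<dots> \<le> ennreal (exp (?c * D\<^sup>2))"
    proof (cases "m > 0")
      case True then show ?thesis using mle by (simp add: ennreal_leI)
    next
      case False then have "m = 0" using mm by simp
      then show ?thesis using one by (simp add: ennreal_leI)
    qed
    finally show ?thesis .
  qed
qed

theorem theorem4:
  fixes Q :: "('s \<times> 's) set" and \<Theta> :: "('s, 'x) prior set"
    and MX :: "'x measure" and f :: "'x \<Rightarrow> 'a::euclidean_space"
    and \<omega> :: "'a measure"
    and P :: "'o measure" and U :: "nat \<Rightarrow> 'o \<Rightarrow> 'a" and Dhat :: "nat \<Rightarrow> 'o \<Rightarrow> real"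
    and m :: nat and \<Delta>\<^sub>0 \<alpha> \<epsilon> \<gamma> \<sigma> :: real
  assumes priors: "\<forall>\<theta>\<in>\<Theta>. \<forall>s. prob_space (snd \<theta> s) \<and> sets (snd \<theta> s) = sets MX"
    and f_meas: "f \<in> borel_measurable MX"
    and \<omega>_prob: "prob_space \<omega>" and \<omega>_sets: "sets \<omega> = sets borel"
    and \<omega>_sphere: "emeasure \<omega> (sphere 0 1) = 1"
    and \<omega>_cont: "\<forall>u. emeasure \<omega> {u} = 0"
    and P_prob: "prob_space P"
    and m_pos: "m > 0"
    and U_meas: "\<forall>l\<in>{1..m}. U l \<in> borel_measurable P"
    and U_indep: "prob_space.indep_vars P (\<lambda>_. borel) U {1..m}"
    and U_distr: "\<forall>l\<in>{1..m}. distr P borel (U l) = \<omega>"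
    and Dhat_meas: "\<forall>l\<in>{1..m}. Dhat l \<in> borel_measurable P"
    and Delta_bd: "\<forall>u\<in>sphere 0 1. 0 \<le> Delta_inf Q \<Theta> f u \<and> Delta_inf Q \<Theta> f u \<le> ereal \<Delta>\<^sub>0"
    and \<alpha>: "\<alpha> > 1" and \<epsilon>: "\<epsilon> \<ge> 0" and \<gamma>: "0 < \<gamma>" "\<gamma> < 1"
    and \<sigma>: "\<sigma> > 0"
    and Dhat_cover: "\<exists>A\<in>sets P. measure P A \<ge> 1 - \<gamma> / 2 \<and>
        (\<forall>x\<in>A. \<forall>l\<in>{1..m}. Delta_inf Q \<Theta> f (U l x) \<le> ereal (Dhat l x))"
  shows "\<exists>E\<in>sets P. measure P E \<ge> 1 - \<gamma> \<and>
    (\<forall>x\<in>E.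
      (let c = \<alpha> * (\<alpha> - 1) / (2 * \<sigma>\<^sup>2);
           mu = (1 / real m) * (\<Sum>l=1..m. exp (c * (Dhat l x)\<^sup>2));
           b = exp (c * \<Delta>\<^sub>0\<^sup>2)
       in 1 / (\<alpha> - 1) * ln (mu + (b - 1) * sqrt (ln (4 / \<gamma>) / (2 * real m))) \<le> \<epsilon>)
      \<longrightarrow> joint_SRPP \<alpha> \<epsilon> \<omega> Q \<Theta> (gauss_mech_law f \<sigma>))"
proof -
  interpret Pp: prob_space P by (rule P_prob)
  interpret W: prob_space \<omega> by (rule \<omega>_prob)
  define c where "c = \<alpha> * (\<alpha> - 1) / (2 * \<sigma>\<^sup>2)"
  define b where "b = exp (c * \<Delta>\<^sub>0\<^sup>2)"
  define t where "t = (b - 1) * sqrt (ln (4 / \<gamma>) / (2 * real m))"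
  define K where "K = exp ((\<alpha> - 1) * \<epsilon>)"
  have c0: "c \<ge> 0" unfolding c_def using \<alpha> by simp
  have b1: "b \<ge> 1" unfolding b_def using c0 by simp
  have K1: "K \<ge> 1" unfolding K_def using \<alpha> \<epsilon> by simp
  have t0: "t \<ge> 0" unfolding t_def using b1 \<gamma> by simp
  have mpos: "real m > 0" using m_pos by simp
  show ?thesis
  proof (cases "joint_SRPP \<alpha> \<epsilon> \<omega> Q \<Theta> (gauss_mech_law f \<sigma>)")
    case True
    show ?thesis
      by (rule bexI[of _ "space P"]) (use True \<gamma> Pp.prob_space in auto)
  next
    case False
    then obtain \<theta> si sj where \<theta>: "\<theta> \<in> \<Theta>" and Q: "(si, sj) \<in> Q"
      and psi: "pmf (fst \<theta>) si > 0" and psj: "pmf (fst \<theta>) sj > 0"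
      and JSD: "JSD \<alpha> \<omega> (gauss_mech_law f \<sigma> \<theta> si) (gauss_mech_law f \<sigma> \<theta> sj) > ereal \<epsilon>"
      unfolding joint_SRPP_def by (auto simp: not_le)
    define F where "F u = ereal_exp (ereal (\<alpha> - 1) * renyi_div \<alpha> (proj_meas u (gauss_mech_law f \<sigma> \<theta> si))
            (proj_meas u (gauss_mech_law f \<sigma> \<theta> sj)))" for u
    define Dl where "Dl u = real_of_ereal (Delta_inf Q \<Theta> f u)" for u
    have Dl: "Delta_inf Q \<Theta> f u = ereal (Dl u) \<and> 0 \<le> Dl u \<and> Dl u \<le> \<Delta>\<^sub>0" if "u \<in> sphere 0 1" for u
    proof -
      have "0 \<le> Delta_inf Q \<Theta> f u" "Delta_inf Q \<Theta> f u \<le> ereal \<Delta>\<^sub>0" using Delta_bd that by auto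
      then show ?thesis unfolding Dl_def by (cases "Delta_inf Q \<Theta> f u") auto
    qed
    have g_le_b: "exp (c * (Dl u)\<^sup>2) \<le> b" if "u \<in> sphere 0 1" for u
    proof -
      have "(Dl u)\<^sup>2 \<le> \<Delta>\<^sub>0\<^sup>2" using Dl[OF that] by (intro power_mono) auto
      then have "c * (Dl u)\<^sup>2 \<le> c * \<Delta>\<^sub>0\<^sup>2" using c0 by (rule mult_left_mono)
      then show ?thesis unfolding b_def by simp
    qed
    have g_ge_1: "1 \<le> exp (c * (Dl u)\<^sup>2)" for u
    proof -
      have "0 \<le> c * (Dl u)\<^sup>2" using c0 by simp
      then show ?thesis by simp
    qed
    have Fle: "F u \<le> ennreal (exp (c * (Dl u)\<^sup>2))" if u: "u \<in> sphere 0 1" for u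
    proof -
      have nu: "norm u = 1" using u by simp
      have pri: "prob_space (snd \<theta> si)" "sets (snd \<theta> si) = sets MX"
        "prob_space (snd \<theta> sj)" "sets (snd \<theta> sj) = sets MX" using priors \<theta> by auto
      have "W_inf (proj_meas u (query_law f \<theta> si)) (proj_meas u (query_law f \<theta> sj)) \<le> Delta_inf Q \<Theta> f u"
        unfolding Delta_inf_def by (rule Sup_upper) (use \<theta> Q psi psj in blast)
      then have W: "W_inf (proj_meas u (query_law f \<theta> si)) (proj_meas u (query_law f \<theta> sj)) \<le> ereal (Dl u)"
        using Dl[OF u] by simp
      show ?thesis unfolding F_def c_def
        by (rule mech_slice_bound[OF pri f_meas \<sigma> \<alpha> nu W])
    qed
    define I where "I = (\<integral>\<^sup>+ u. F u \<partial>\<omega>)"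
    have JSD_eq: "JSD \<alpha> \<omega> (gauss_mech_law f \<sigma> \<theta> si) (gauss_mech_law f \<sigma> \<theta> sj) = ereal (1 / (\<alpha> - 1)) * ennreal_ln I"
      unfolding JSD_def I_def F_def ..
    have IK: "I > ennreal K"
    proof (rule ccontr)
      assume "\<not> I > ennreal K"
      then have IK: "I \<le> ennreal K" by simp
      show False
      proof (cases "I = 0")
        case True
        then have "JSD \<alpha> \<omega> (gauss_mech_law f \<sigma> \<theta> si) (gauss_mech_law f \<sigma> \<theta> sj) = - \<infinity>"
          unfolding JSD_eq ennreal_ln_def using \<alpha> by simp
        then show False using JSD by simp
      next
        case False
        have "I \<noteq> \<infinity>" using IK by (auto simp: top_unique)
        then obtain r where r: "I = ennreal r" "r \<ge> 0" by (cases I) auto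
        have rpos: "r > 0" using False r by (auto simp: less_le)
        have K0: "0 \<le> K" using K1 by simp
        have rK: "r \<le> K" using IK r K0 by (simp add: ennreal_le_iff)
        have "ln r \<le> ln K" using rpos rK by simp
        also have "ln K = (\<alpha> - 1) * \<epsilon>" unfolding K_def by simp
        finally have "ln r / (\<alpha> - 1) \<le> \<epsilon>" using \<alpha> by (simp add: divide_le_eq mult.commute)
        moreover have "JSD \<alpha> \<omega> (gauss_mech_law f \<sigma> \<theta> si) (gauss_mech_law f \<sigma> \<theta> sj) = ereal (ln r / (\<alpha> - 1))"
          unfolding JSD_eq ennreal_ln_def using r rpos by simp
        ultimately show False using JSD by simp
      qed
    qed
    then have "ennreal K < (SUP g \<in> {g. simple_function \<omega> g \<and> g \<le> F}. integral\<^sup>S \<omega> g)"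
      unfolding I_def nn_integral_def .
    then obtain h where h_sf: "simple_function \<omega> h" and hF: "h \<le> F" and hK: "ennreal K < integral\<^sup>S \<omega> h"
      unfolding less_SUP_iff by blast
    have hm[measurable]: "h \<in> borel_measurable \<omega>" by (rule borel_measurable_simple_function[OF h_sf])
    have hK': "ennreal K < (\<integral>\<^sup>+ u. h u \<partial>\<omega>)" using hK nn_integral_eq_simple_integral[OF h_sf] by simp
    have sph[measurable]: "sphere (0::'a) 1 \<in> sets \<omega>" unfolding \<omega>_sets by simp
    define h' where "h' u = (if u \<in> sphere 0 1 then min b (max 1 (enn2real (h u))) else 1)" for u
    have h'm[measurable]: "h' \<in> borel_measurable \<omega>" unfolding h'_def by measurable
    have h'mb[measurable]: "h' \<in> borel_measurable borel"
      using h'm by (subst (asm) measurable_cong_sets[OF \<omega>_sets refl])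
    have h'1: "1 \<le> h' u" and h'b: "h' u \<le> b" for u unfolding h'_def using b1 by auto
    have h'sph: "h u \<le> ennreal (h' u) \<and> h' u \<le> exp (c * (Dl u)\<^sup>2)" if u: "u \<in> sphere 0 1" for u
    proof -
      have "h u \<le> ennreal (exp (c * (Dl u)\<^sup>2))" using hF Fle[OF u] by (auto simp: le_fun_def intro: order_trans)
      moreover then have "h u \<noteq> \<infinity>" by (auto simp: top_unique)
      ultimately obtain r where r: "h u = ennreal r" "r \<ge> 0" "r \<le> exp (c * (Dl u)\<^sup>2)"
        by (cases "h u") (auto simp: ennreal_le_iff)
      have "max 1 r \<le> exp (c * (Dl u)\<^sup>2)" using r g_ge_1 by simp
      then have mb: "max 1 r \<le> b" using g_le_b[OF u] by linarith
      have "h' u = max 1 r" unfolding h'_def using u r(1,2) mb by (simp add: min_absorb2)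
      then show ?thesis using r \<open>max 1 r \<le> exp (c * (Dl u)\<^sup>2)\<close> by (simp add: ennreal_leI)
    qed
    have h'abs: "norm (h' u) \<le> b" for u using h'1[of u] h'b[of u] by simp
    have h'int: "integrable \<omega> h'"
      by (rule W.integrable_const_bound[where B=b]) (use h'abs in auto)
    define Eh where "Eh = (\<integral>u. h' u \<partial>\<omega>)"
    have AEsph: "AE u in \<omega>. u \<in> sphere 0 1"
      by (rule W.AE_prob_1) (use \<omega>_sphere in \<open>simp add: W.emeasure_eq_measure\<close>)
    have "ennreal K < (\<integral>\<^sup>+ u. h u \<partial>\<omega>)" by (rule hK')
    also have "\<dots> \<le> (\<integral>\<^sup>+ u. ennreal (h' u) \<partial>\<omega>)"
    proof (rule nn_integral_mono_AE)
      show "AE u in \<omega>. h u \<le> ennreal (h' u)" using AEsph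
      proof eventually_elim
        case (elim u) then show ?case using h'sph[of u] by blast
      qed
    qed
    also have "\<dots> = ennreal Eh" unfolding Eh_def
      by (rule nn_integral_eq_integral[OF h'int]) (use h'1 in \<open>auto intro: order_trans[OF zero_le_one]\<close>)
    finally have EhK: "K < Eh" using K1 ennreal_less_iff[of K Eh] by simp
    have b1': "b > 1"
    proof (rule ccontr)
      assume "\<not> b > 1"
      then have "b = 1" using b1 by simp
      then have "h' u = 1" for u using h'1 h'b by (simp add: antisym)
      then have "h' = (\<lambda>_. 1)" by (simp add: fun_eq_iff)
      then have "Eh = 1" unfolding Eh_def by (simp add: W.prob_space)
      then show False using EhK K1 by simp
    qed
    define X where "X l x = h' (U l x)" for l x
    have Um[measurable]: "l \<in> {1..m} \<Longrightarrow> U l \<in> borel_measurable P" for l using U_meas by auto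
    have EX: "Pp.expectation (X l) = Eh" if l: "l \<in> {1..m}" for l
    proof -
      have "Eh = (\<integral>u. h' u \<partial>distr P borel (U l))" unfolding Eh_def using U_distr l by simp
      also have "\<dots> = Pp.expectation (X l)" unfolding X_def using integral_distr[OF Um[OF l] h'mb] by simp
      finally show ?thesis by simp
    qed
    interpret Hf: Hoeffding_ineq P "{1..m}" X "\<lambda>_. 1" "\<lambda>_. b" "\<Sum>l\<in>{1..m}. Pp.expectation (X l)"
    proof unfold_locales
      show "finite {1..m}" by simp
      show "Pp.indep_vars (\<lambda>_. borel) X {1..m}"
        unfolding X_def by (rule Pp.indep_vars_compose2[OF U_indep]) simp
      fix l assume "l \<in> {1..m}"
      show "AE x in P. X l x \<in> {1..b}" unfolding X_def using h'1 h'b by auto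
    qed simp
    have mu: "(\<Sum>l\<in>{1..m}. Pp.expectation (X l)) = real m * Eh" using EX by simp
    have "Pp.prob {x\<in>space P. (\<Sum>l\<in>{1..m}. X l x) \<le> (\<Sum>l\<in>{1..m}. Pp.expectation (X l)) - real m * t}
        \<le> exp (-2 * (real m * t)\<^sup>2 / (\<Sum>l\<in>{1..m}. (b - 1)\<^sup>2))"
      by (rule Hf.Hoeffding_ineq_le) (use t0 b1' m_pos in auto)
    also have "-2 * (real m * t)\<^sup>2 / (\<Sum>l\<in>{1..m}. (b - 1)\<^sup>2) = - ln (4 / \<gamma>)"
    proof -
      have ln0: "ln (4 / \<gamma>) \<ge> 0" using \<gamma> by simp
      have "t\<^sup>2 = (b - 1)\<^sup>2 * (ln (4 / \<gamma>) / (2 * real m))"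
        unfolding t_def using ln0 mpos by (simp add: power_mult_distrib)
      then have ht: "real m * (2 * t\<^sup>2) = (b - 1)\<^sup>2 * ln (4 / \<gamma>)" using mpos by (simp add: field_simps)
      have S: "(\<Sum>l\<in>{1..m}. (b - 1)\<^sup>2) = real m * (b - 1)\<^sup>2" by simp
      have gen: "-2 * (real m * t)\<^sup>2 / (real m * d) = - (real m * (2 * t\<^sup>2)) / d" for d
        using mpos by (cases "d = 0") (simp_all add: power2_eq_square field_simps)
      have "-2 * (real m * t)\<^sup>2 / (real m * (b - 1)\<^sup>2) = - (real m * (2 * t\<^sup>2)) / (b - 1)\<^sup>2"
        by (rule gen)
      also have "\<dots> = - ln (4 / \<gamma>)" unfolding ht using b1' by simp
      finally show ?thesis unfolding S .
    qed
    also have "exp (- ln (4 / \<gamma>)) = \<gamma> / 4" using \<gamma> by (simp add: exp_minus)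
    finally have PB: "Pp.prob {x\<in>space P. (\<Sum>l\<in>{1..m}. X l x) \<le> real m * Eh - real m * t} \<le> \<gamma> / 4"
      unfolding mu .
    define B where "B = {x\<in>space P. (\<Sum>l\<in>{1..m}. X l x) \<le> real m * Eh - real m * t}"
    have Bm: "B \<in> sets P" unfolding B_def X_def by measurable
    obtain A where A: "A \<in> sets P" "measure P A \<ge> 1 - \<gamma> / 2"
      and Acov: "\<forall>x\<in>A. \<forall>l\<in>{1..m}. Delta_inf Q \<Theta> f (U l x) \<le> ereal (Dhat l x)"
      using Dhat_cover by blast
    show ?thesis
    proof (rule bexI[of _ "A - B"], intro conjI ballI impI)
      show "A - B \<in> sets P" using A Bm by auto
      have d1: "measure P (A - B) = measure P A - measure P (A \<inter> B)" by (rule Pp.finite_measure_Diff'[OF A(1) Bm])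
      have d2: "measure P (A \<inter> B) \<le> measure P B" by (rule Pp.finite_measure_mono) (use Bm in auto)
      from d1 d2 show "1 - \<gamma> \<le> measure P (A - B)" using A(2) PB \<gamma> unfolding B_def by linarith
    next
      fix x assume x: "x \<in> A - B"
      let ?mu = "(1 / real m) * (\<Sum>l=1..m. exp (c * (Dhat l x)\<^sup>2))"
      assume cond: "let c = \<alpha> * (\<alpha> - 1) / (2 * \<sigma>\<^sup>2);
           mu = (1 / real m) * (\<Sum>l=1..m. exp (c * (Dhat l x)\<^sup>2));
           b = exp (c * \<Delta>\<^sub>0\<^sup>2)
       in 1 / (\<alpha> - 1) * ln (mu + (b - 1) * sqrt (ln (4 / \<gamma>) / (2 * real m))) \<le> \<epsilon>"
      then have cond': "1 / (\<alpha> - 1) * ln (?mu + t) \<le> \<epsilon>"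
        unfolding Let_def c_def[symmetric] b_def[symmetric] t_def[symmetric] .
      have xs: "x \<in> space P" using x A(1) sets.sets_into_space by blast
      have Xle: "X l x \<le> exp (c * (Dhat l x)\<^sup>2)" if l: "l \<in> {1..m}" for l
      proof (cases "U l x \<in> sphere 0 1")
        case True
        have "Delta_inf Q \<Theta> f (U l x) \<le> ereal (Dhat l x)" using Acov x l by blast
        then have D1: "ereal (Dl (U l x)) \<le> ereal (Dhat l x)" using Dl[OF True] by simp
        have "(Dl (U l x))\<^sup>2 \<le> (Dhat l x)\<^sup>2" using D1 Dl[OF True] by (intro power_mono) auto
        then have "c * (Dl (U l x))\<^sup>2 \<le> c * (Dhat l x)\<^sup>2" using c0 by (rule mult_left_mono)
        then show ?thesis unfolding X_def using h'sph[OF True] by (meson exp_le_cancel_iff order_trans)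
      next
        case False
        have "0 \<le> c * (Dhat l x)\<^sup>2" using c0 by simp
        then show ?thesis unfolding X_def h'_def using False by simp
      qed
      have "real m * Eh - real m * t < (\<Sum>l\<in>{1..m}. X l x)" using x xs unfolding B_def by auto
      also have "\<dots> \<le> (\<Sum>l=1..m. exp (c * (Dhat l x)\<^sup>2))" by (rule sum_mono) (rule Xle)
      finally have "Eh - t < ?mu" using mpos by (simp add: field_simps)
      then have "K < ?mu + t" using EhK by simp
      then have "ln K < ln (?mu + t)" using K1 by simp
      then have "(\<alpha> - 1) * \<epsilon> < ln (?mu + t)" unfolding K_def by simp
      then have "\<epsilon> < 1 / (\<alpha> - 1) * ln (?mu + t)" using \<alpha> by (simp add: field_simps)
      with cond' have False by simp
      then show "joint_SRPP \<alpha> \<epsilon> \<omega> Q \<Theta> (gauss_mech_law f \<sigma>)" ..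
    qed
  qed
qed

end
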